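(* Let $\mathcal L=(\Sigma,X)$ be a language and $\Lambda$ a fuzzy theory in $\mathcal L$. Let $\sim_\Lambda$ be the relation on $\mathrm{Terms}(\mathcal L)$ given by $t\sim_\Lambda s$ iff $\vdash_\Lambda t\equiv s$; let $\mathrm{Terms}_\Lambda=\mathrm{Terms}(\mathcal L)/\sim_\Lambda$, $\mu_\Lambda([t])=\sup\{l\in H\mid\ \vdash_\Lambda\mathsf E_l(t)\}$, $c^{\mathcal T_\Lambda}=[c]$ for $c\in C$, and $f^{\mathcal T_\Lambda}([t_1],\dots,[t_n])=[f(t_1,\dots,t_n)]$ for $f\in O$, $n=\mathrm{ar}(f)$; let $\iota_{can}:X\to\mathrm{Terms}_\Lambda$, $x\mapsto[x]$. Then $\sim_\Lambda$ is an equivalence relation, $\mathcal T_\Lambda=((\mathrm{Terms}_\Lambda,\mu_\Lambda),\Sigma^{\mathcal T_\Lambda})$ is a well-defined $\Sigma$-algebra, and: (1) for every formula $\phi$, the following are equivalent: (a) $\mathcal T_\Lambda\vDash\phi$; (b) $\mathcal T_\Lambda\vDash_{\iota_{can}}\phi$; (c) $\vdash_\Lambda\phi$; (2) for every assignment $\iota:X\to\mathrm{Terms}_\Lambda$, every section $\sigma$ of the quotient map $\mathrm{Terms}(\mathcal L)\to\mathrm{Terms}_\Lambda$ and every formula $\phi$: $\mathcal T_\Lambda\vDash_\iota\phi$ iff $\vdash_\Lambda\phi[\sigma\circ\iota]$; (3) $\mathcal T_\Lambda$ is a model of $\Lambda$.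
   Context: $H$ is a frame with bottom $\bot$. An $H$-fuzzy set is a pair $(A,\mu_A)$ of a set $A$ and a function $\mu_A:A\to H$; an arrow $f:(A,\mu_A)\to(B,\mu_B)$ is a function with $\mu_A(x)\le\mu_B(f(x))$; they form $\mathbf{Fuz}_H$. For $n\ge1$, $(A,\mu_A)^n=(A^n,\mu)$ with $\mu(a_1,\dots,a_n)=\bigwedge_i\mu_A(a_i)$. A signature $\Sigma=(O,\mathrm{ar},C)$ consists of a set $O$ of operation symbols with arity $\mathrm{ar}:O\to\{1,2,3,\dots\}$ and a set $C$ of constant symbols. A language is a pair $\mathcal L=(\Sigma,X)$ with $X$ a set of variables. $\mathrm{Terms}(\mathcal L)$ is the smallest set containing $X\sqcup C$ and containing $f(t_1,\dots,t_{\mathrm{ar}(f)})$ whenever $f\in O$ and all $t_i\in\mathrm{Terms}(\mathcal L)$. A formula is either an equation $s\equiv t$ ($s,t$ terms) or a membership proposition $\mathsf E_l(t)$ with $l\in H$ and $t$ a term. A sequent $\Gamma\vdash\psi$ is a pair of a (possibly infinite) set $\Gamma$ of formulas and a formula $\psi$; $\vdash\psi$ means $\emptyset\vdash\psi$. A fuzzy theory in $\mathcal L$ is a set of sequents. For $\sigma:X\to\mathrm{Terms}(\mathcal L)$, $t[\sigma]$ is simultaneous substitution, extended to formulas by $(s\equiv t)[\sigma]=(s[\sigma]\equiv t[\sigma])$, $\mathsf E_l(t)[\sigma]=\mathsf E_l(t[\sigma])$, and to sets of formulas elementwise. The rules of the fuzzy sequent calculus are (for all sets of formulas $\Gamma,\Delta,\Phi$,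 formulas $\phi,\psi$, terms, $l,l'\in H$): (A) $\Gamma\vdash\phi$ if $\phi\in\Gamma$; (Weak) from $\Gamma\vdash\phi$ infer $\Gamma\cup\Delta\vdash\phi$; (Cut) from $\Gamma\vdash\phi$ for all $\phi\in\Phi$ and $\Phi\vdash\psi$ infer $\Gamma\vdash\psi$; (Refl) $\Gamma\vdash s\equiv s$; (Sym) from $\Gamma\vdash s\equiv t$ infer $\Gamma\vdash t\equiv s$; (Trans) from $\Gamma\vdash s\equiv t$ and $\Gamma\vdash t\equiv u$ infer $\Gamma\vdash s\equiv u$; (Sub) from $\Gamma\vdash\psi$ infer $\Gamma[\sigma]\vdash\psi[\sigma]$ for any $\sigma:X\to\mathrm{Terms}(\mathcal L)$; (Cong) for $f\in O$ with $n=\mathrm{ar}(f)$, from $\Gamma\vdash t_i\equiv s_i$ ($i=1,\dots,n$) infer $\Gamma\vdash f(t_1,\dots,t_n)\equiv f(s_1,\dots,s_n)$; (Inf) $\Gamma\vdash\mathsf E_\bot(t)$; (Mon) from $\Gamma\vdash\mathsf E_l(t)$ infer $\Gamma\vdash\mathsf E_{l\wedge l'}(t)$; (Exp) for $f\in O$ with $n=\mathrm{ar}(f)$, from $\Gamma\vdash\mathsf E_{l_i}(t_i)$ ($i=1,\dots,n$) infer $\Gamma\vdash\mathsf E_{l_1\wedge\dots\wedge l_n}(f(t_1,\dots,t_n))$; (Sup) for $S\subseteq H$, from $\Gamma\vdash\mathsf E_l(t)$ for all $l\in S$ infer $\Gamma\vdash\mathsf E_{\sup S}(t)$; (Fun)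 from $\Gamma\vdash t\equiv s$ and $\Gamma\vdash\mathsf E_l(t)$ infer $\Gamma\vdash\mathsf E_l(s)$. The deductive closure $\Lambda^{\vdash}$ of a theory $\Lambda$ is the smallest set of sequents containing $\Lambda$ and closed under all these rules; $\vdash_\Lambda\phi$ means $(\emptyset\vdash\phi)\in\Lambda^{\vdash}$. A $\Sigma$-algebra $\mathcal A=((A,\mu_A),\Sigma^{\mathcal A})$ is an $H$-fuzzy set $(A,\mu_A)$ together with, for each $f\in O$, an arrow $f^{\mathcal A}:(A,\mu_A)^{\mathrm{ar}(f)}\to(A,\mu_A)$ of $\mathbf{Fuz}_H$ and, for each $c\in C$, an element $c^{\mathcal A}\in A$. An assignment is a function $\iota:X\to A$; evaluation: $x^{\mathcal A,\iota}=\iota(x)$, $c^{\mathcal A,\iota}=c^{\mathcal A}$, $f(t_1,\dots,t_n)^{\mathcal A,\iota}=f^{\mathcal A}(t_1^{\mathcal A,\iota},\dots,t_n^{\mathcal A,\iota})$. $\mathcal A\vDash_\iota s\equiv t$ iff $s^{\mathcal A,\iota}=t^{\mathcal A,\iota}$; $\mathcal A\vDash_\iota\mathsf E_l(t)$ iff $l\le\mu_A(t^{\mathcal A,\iota})$; $\mathcal A\vDash\phi$ iff $\mathcal A\vDash_\iota\phi$ for all assignments $\iota$. $\mathcal A$ satisfies $\Gamma\vdash\psi$ if for every assignment $\iota$ with $\mathcal A\vDash_\iota\phi$ for all $\phi\in\Gamma$ one has $\mathcal A\vDash_\iota\psi$. $\mathcal A$ is a model of a theory $\Lambda$ if it satisfies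 every sequent of $\Lambda$. *)

theory Defs
  imports Main
begin

definition frame_law :: "'h::complete_lattice itself \<Rightarrow> bool" where
  "frame_law _ \<longleftrightarrow> (\<forall>(a::'h) S. inf a (Sup S) = Sup ((\<lambda>s. inf a s) ` S))"

text \<open>A signature is (Ops, ar, Cs); a language adds a set Xs of variables.
Raw syntax trees; the well-formed ones are carved out by term_set.\<close>
datatype ('v, 'o, 'c) trm = Var 'v | Cst 'c | App 'o "('v, 'o, 'c) trm list"

inductive_set term_set :: "'o set \<Rightarrow> ('o \<Rightarrow> nat) \<Rightarrow> 'c set \<Rightarrow> 'v set \<Rightarrow> ('v, 'o, 'c) trm set"
  for Ops ar Cs Xs where
  var: "x \<in> Xs \<Longrightarrow> Var x \<in> term_set Ops ar Cs Xs"
| cst: "c \<in> Cs \<Longrightarrow> Cst c \<in> term_set Ops ar Cs Xs"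
| app: "f \<in> Ops \<Longrightarrow> length ts = ar f \<Longrightarrow> (\<forall>t\<in>set ts. t \<in> term_set Ops ar Cs Xs)
        \<Longrightarrow> App f ts \<in> term_set Ops ar Cs Xs"

datatype ('v, 'o, 'c, 'h) fml = Eqn "('v, 'o, 'c) trm" "('v, 'o, 'c) trm" | Mem 'h "('v, 'o, 'c) trm"

definition fml_set :: "'o set \<Rightarrow> ('o \<Rightarrow> nat) \<Rightarrow> 'c set \<Rightarrow> 'v set \<Rightarrow> ('v, 'o, 'c, 'h) fml set" where
  "fml_set Ops ar Cs Xs =
     {Eqn s t | s t. s \<in> term_set Ops ar Cs Xs \<and> t \<in> term_set Ops ar Cs Xs}
     \<union> {Mem l t | l t. t \<in> term_set Ops ar Cs Xs}"

primrec tsubst :: "('v \<Rightarrow> ('v, 'o, 'c) trm) \<Rightarrow> ('v, 'o, 'c) trm \<Rightarrow> ('v, 'o, 'c) trm" where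
  "tsubst \<sigma> (Var x) = \<sigma> x"
| "tsubst \<sigma> (Cst c) = Cst c"
| "tsubst \<sigma> (App f ts) = App f (map (tsubst \<sigma>) ts)"

primrec fsubst :: "('v \<Rightarrow> ('v, 'o, 'c) trm) \<Rightarrow> ('v, 'o, 'c, 'h) fml \<Rightarrow> ('v, 'o, 'c, 'h) fml" where
  "fsubst \<sigma> (Eqn s t) = Eqn (tsubst \<sigma> s) (tsubst \<sigma> t)"
| "fsubst \<sigma> (Mem l t) = Mem l (tsubst \<sigma> t)"

type_synonym ('v, 'o, 'c, 'h) sequent = "('v, 'o, 'c, 'h) fml set \<times> ('v, 'o, 'c, 'h) fml"

definition fuzzy_theory ::
  "'o set \<Rightarrow> ('o \<Rightarrow> nat) \<Rightarrow> 'c set \<Rightarrow> 'v set \<Rightarrow> ('v, 'o, 'c, 'h) sequent set \<Rightarrow> bool" where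
  "fuzzy_theory Ops ar Cs Xs \<Lambda> \<longleftrightarrow>
     (\<forall>(\<Gamma>, \<psi>)\<in>\<Lambda>. \<Gamma> \<subseteq> fml_set Ops ar Cs Xs \<and> \<psi> \<in> fml_set Ops ar Cs Xs)"

inductive_set deriv ::
  "'o set \<Rightarrow> ('o \<Rightarrow> nat) \<Rightarrow> 'c set \<Rightarrow> 'v set \<Rightarrow> ('v, 'o, 'c, 'h::complete_lattice) sequent set
   \<Rightarrow> ('v, 'o, 'c, 'h) sequent set"
  for Ops ar Cs Xs \<Lambda> where
  Thy: "s \<in> \<Lambda> \<Longrightarrow> s \<in> deriv Ops ar Cs Xs \<Lambda>"
| A: "\<Gamma> \<subseteq> fml_set Ops ar Cs Xs \<Longrightarrow> \<phi> \<in> \<Gamma> \<Longrightarrow> (\<Gamma>, \<phi>) \<in> deriv Ops ar Cs Xs \<Lambda>"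
| Weak: "(\<Gamma>, \<phi>) \<in> deriv Ops ar Cs Xs \<Lambda> \<Longrightarrow> \<Delta> \<subseteq> fml_set Ops ar Cs Xs
        \<Longrightarrow> (\<Gamma> \<union> \<Delta>, \<phi>) \<in> deriv Ops ar Cs Xs \<Lambda>"
| Cut: "\<Gamma> \<subseteq> fml_set Ops ar Cs Xs \<Longrightarrow> (\<forall>\<phi>\<in>\<Phi>. (\<Gamma>, \<phi>) \<in> deriv Ops ar Cs Xs \<Lambda>)
        \<Longrightarrow> (\<Phi>, \<psi>) \<in> deriv Ops ar Cs Xs \<Lambda> \<Longrightarrow> (\<Gamma>, \<psi>) \<in> deriv Ops ar Cs Xs \<Lambda>"
| Refl: "\<Gamma> \<subseteq> fml_set Ops ar Cs Xs \<Longrightarrow> s \<in> term_set Ops ar Cs Xs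
        \<Longrightarrow> (\<Gamma>, Eqn s s) \<in> deriv Ops ar Cs Xs \<Lambda>"
| Sym: "(\<Gamma>, Eqn s t) \<in> deriv Ops ar Cs Xs \<Lambda> \<Longrightarrow> (\<Gamma>, Eqn t s) \<in> deriv Ops ar Cs Xs \<Lambda>"
| Trans: "(\<Gamma>, Eqn s t) \<in> deriv Ops ar Cs Xs \<Lambda> \<Longrightarrow> (\<Gamma>, Eqn t u) \<in> deriv Ops ar Cs Xs \<Lambda>
        \<Longrightarrow> (\<Gamma>, Eqn s u) \<in> deriv Ops ar Cs Xs \<Lambda>"
| Sub: "(\<Gamma>, \<psi>) \<in> deriv Ops ar Cs Xs \<Lambda> \<Longrightarrow> (\<forall>x\<in>Xs. \<sigma> x \<in> term_set Ops ar Cs Xs)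
        \<Longrightarrow> (fsubst \<sigma> ` \<Gamma>, fsubst \<sigma> \<psi>) \<in> deriv Ops ar Cs Xs \<Lambda>"
| Cong: "f \<in> Ops \<Longrightarrow> length ts = ar f \<Longrightarrow> length ss = ar f
        \<Longrightarrow> (\<forall>i<ar f. (\<Gamma>, Eqn (ts ! i) (ss ! i)) \<in> deriv Ops ar Cs Xs \<Lambda>)
        \<Longrightarrow> (\<Gamma>, Eqn (App f ts) (App f ss)) \<in> deriv Ops ar Cs Xs \<Lambda>"
| Inf: "\<Gamma> \<subseteq> fml_set Ops ar Cs Xs \<Longrightarrow> t \<in> term_set Ops ar Cs Xs
        \<Longrightarrow> (\<Gamma>, Mem bot t) \<in> deriv Ops ar Cs Xs \<Lambda>"
| Mon: "(\<Gamma>, Mem l t) \<in> deriv Ops ar Cs Xs \<Lambda> \<Longrightarrow> (\<Gamma>, Mem (inf l l') t) \<in> deriv Ops ar Cs Xs \<Lambda>"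
| Exp: "f \<in> Ops \<Longrightarrow> length ts = ar f \<Longrightarrow> length ls = ar f
        \<Longrightarrow> (\<forall>i<ar f. (\<Gamma>, Mem (ls ! i) (ts ! i)) \<in> deriv Ops ar Cs Xs \<Lambda>)
        \<Longrightarrow> (\<Gamma>, Mem (Inf (set ls)) (App f ts)) \<in> deriv Ops ar Cs Xs \<Lambda>"
| Sup: "\<Gamma> \<subseteq> fml_set Ops ar Cs Xs \<Longrightarrow> t \<in> term_set Ops ar Cs Xs
        \<Longrightarrow> (\<forall>l\<in>S. (\<Gamma>, Mem l t) \<in> deriv Ops ar Cs Xs \<Lambda>)
        \<Longrightarrow> (\<Gamma>, Mem (Sup S) t) \<in> deriv Ops ar Cs Xs \<Lambda>"
| Fun: "(\<Gamma>, Eqn t s) \<in> deriv Ops ar Cs Xs \<Lambda> \<Longrightarrow> (\<Gamma>, Mem l t) \<in> deriv Ops ar Cs Xs \<Lambda>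
        \<Longrightarrow> (\<Gamma>, Mem l s) \<in> deriv Ops ar Cs Xs \<Lambda>"

definition provable ::
  "'o set \<Rightarrow> ('o \<Rightarrow> nat) \<Rightarrow> 'c set \<Rightarrow> 'v set \<Rightarrow> ('v, 'o, 'c, 'h::complete_lattice) sequent set
   \<Rightarrow> ('v, 'o, 'c, 'h) fml \<Rightarrow> bool" where
  "provable Ops ar Cs Xs \<Lambda> \<phi> \<longleftrightarrow> ({}, \<phi>) \<in> deriv Ops ar Cs Xs \<Lambda>"

record ('a, 'o, 'c, 'h) salg =
  carrier :: "'a set"
  mu :: "'a \<Rightarrow> 'h"
  ops :: "'o \<Rightarrow> 'a list \<Rightarrow> 'a"
  csts :: "'c \<Rightarrow> 'a"

text \<open>Each operation is an arrow (A,mu)^n \<rightarrow> (A,mu) of Fuz_H: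
it maps A^n into A and mu(a_1) \<and> ... \<and> mu(a_n) \<le> mu(f(a_1,...,a_n)).\<close>
definition is_salg :: "'o set \<Rightarrow> ('o \<Rightarrow> nat) \<Rightarrow> 'c set \<Rightarrow> ('a, 'o, 'c, 'h::complete_lattice) salg \<Rightarrow> bool" where
  "is_salg Ops ar Cs \<A> \<longleftrightarrow>
     (\<forall>f\<in>Ops. \<forall>as. length as = ar f \<and> set as \<subseteq> carrier \<A> \<longrightarrow>
         ops \<A> f as \<in> carrier \<A> \<and> Inf (mu \<A> ` set as) \<le> mu \<A> (ops \<A> f as))
     \<and> (\<forall>c\<in>Cs. csts \<A> c \<in> carrier \<A>)"

primrec eval :: "('a, 'o, 'c, 'h) salg \<Rightarrow> ('v \<Rightarrow> 'a) \<Rightarrow> ('v, 'o, 'c) trm \<Rightarrow> 'a" where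
  "eval \<A> \<iota> (Var x) = \<iota> x"
| "eval \<A> \<iota> (Cst c) = csts \<A> c"
| "eval \<A> \<iota> (App f ts) = ops \<A> f (map (eval \<A> \<iota>) ts)"

primrec sat_at :: "('a, 'o, 'c, 'h::complete_lattice) salg \<Rightarrow> ('v \<Rightarrow> 'a) \<Rightarrow> ('v, 'o, 'c, 'h) fml \<Rightarrow> bool" where
  "sat_at \<A> \<iota> (Eqn s t) \<longleftrightarrow> eval \<A> \<iota> s = eval \<A> \<iota> t"
| "sat_at \<A> \<iota> (Mem l t) \<longleftrightarrow> l \<le> mu \<A> (eval \<A> \<iota> t)"

text \<open>Assignments are functions X \<rightarrow> A; values outside Xs are irrelevant.\<close>
definition assignment :: "'v set \<Rightarrow> ('a, 'o, 'c, 'h) salg \<Rightarrow> ('v \<Rightarrow> 'a) \<Rightarrow> bool" where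
  "assignment Xs \<A> \<iota> \<longleftrightarrow> (\<forall>x\<in>Xs. \<iota> x \<in> carrier \<A>)"

definition valid :: "'v set \<Rightarrow> ('a, 'o, 'c, 'h::complete_lattice) salg \<Rightarrow> ('v, 'o, 'c, 'h) fml \<Rightarrow> bool" where
  "valid Xs \<A> \<phi> \<longleftrightarrow> (\<forall>\<iota>. assignment Xs \<A> \<iota> \<longrightarrow> sat_at \<A> \<iota> \<phi>)"

definition sat_seq :: "'v set \<Rightarrow> ('a, 'o, 'c, 'h::complete_lattice) salg \<Rightarrow> ('v, 'o, 'c, 'h) sequent \<Rightarrow> bool" where
  "sat_seq Xs \<A> s \<longleftrightarrow>
     (\<forall>\<iota>. assignment Xs \<A> \<iota> \<longrightarrow> (\<forall>\<phi>\<in>fst s. sat_at \<A> \<iota> \<phi>) \<longrightarrow> sat_at \<A> \<iota> (snd s))"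

definition is_model :: "'v set \<Rightarrow> ('a, 'o, 'c, 'h::complete_lattice) salg \<Rightarrow> ('v, 'o, 'c, 'h) sequent set \<Rightarrow> bool" where
  "is_model Xs \<A> \<Lambda> \<longleftrightarrow> (\<forall>s\<in>\<Lambda>. sat_seq Xs \<A> s)"

definition prov_eq ::
  "'o set \<Rightarrow> ('o \<Rightarrow> nat) \<Rightarrow> 'c set \<Rightarrow> 'v set \<Rightarrow> ('v, 'o, 'c, 'h::complete_lattice) sequent set
   \<Rightarrow> (('v, 'o, 'c) trm \<times> ('v, 'o, 'c) trm) set" where
  "prov_eq Ops ar Cs Xs \<Lambda> =
     {(t, s). t \<in> term_set Ops ar Cs Xs \<and> s \<in> term_set Ops ar Cs Xs
              \<and> provable Ops ar Cs Xs \<Lambda> (Eqn t s :: ('v, 'o, 'c, 'h) fml)}"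

text \<open>Operations are defined on classes through (chosen) representatives, as in the paper;
well-definedness (independence of representatives) is part of the theorem.\<close>
definition term_alg ::
  "'o set \<Rightarrow> ('o \<Rightarrow> nat) \<Rightarrow> 'c set \<Rightarrow> 'v set \<Rightarrow> ('v, 'o, 'c, 'h::complete_lattice) sequent set
   \<Rightarrow> (('v, 'o, 'c) trm set, 'o, 'c, 'h) salg" where
  "term_alg Ops ar Cs Xs \<Lambda> =
     (let R = prov_eq Ops ar Cs Xs \<Lambda> in
      \<lparr> carrier = term_set Ops ar Cs Xs // R,
        mu = (\<lambda>A. Sup {l. provable Ops ar Cs Xs \<Lambda> (Mem l (SOME t. t \<in> A))}),
        ops = (\<lambda>f As. R `` {App f (map (\<lambda>A. SOME t. t \<in> A) As)}),
        csts = (\<lambda>c. R `` {Cst c}) \<rparr>)"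

definition iota_can ::
  "'o set \<Rightarrow> ('o \<Rightarrow> nat) \<Rightarrow> 'c set \<Rightarrow> 'v set \<Rightarrow> ('v, 'o, 'c, 'h::complete_lattice) sequent set
   \<Rightarrow> 'v \<Rightarrow> ('v, 'o, 'c) trm set" where
  "iota_can Ops ar Cs Xs \<Lambda> = (\<lambda>x. prov_eq Ops ar Cs Xs \<Lambda> `` {Var x})"

end

theory Submission
  imports Defs
begin

context
  fixes Ops :: "'o set" and ar :: "'o \<Rightarrow> nat" and Cs :: "'c set" and Xs :: "'v set"
    and \<Lambda> :: "('v, 'o, 'c, 'h::complete_lattice) sequent set"
begin

lemma P_sym: "provable Ops ar Cs Xs \<Lambda> (Eqn s t) \<Longrightarrow> provable Ops ar Cs Xs \<Lambda> (Eqn t s)"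
  unfolding provable_def by (rule deriv.Sym)

lemma equivR: "equiv (term_set Ops ar Cs Xs) (prov_eq Ops ar Cs Xs \<Lambda>)"
  unfolding equiv_def refl_on_def sym_def trans_def prov_eq_def provable_def
  by (auto intro: deriv.Refl deriv.Sym deriv.Trans)

lemma R_sub: "(a, b) \<in> prov_eq Ops ar Cs Xs \<Lambda> \<Longrightarrow> a \<in> term_set Ops ar Cs Xs \<and> b \<in> term_set Ops ar Cs Xs
   \<and> provable Ops ar Cs Xs \<Lambda> (Eqn a b)"
  unfolding prov_eq_def by auto

lemma some_class:
  assumes "A \<in> term_set Ops ar Cs Xs // prov_eq Ops ar Cs Xs \<Lambda>"
  shows "(SOME t. t \<in> A) \<in> term_set Ops ar Cs Xs \<and> prov_eq Ops ar Cs Xs \<Lambda> `` {SOME t. t \<in> A} = A"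
proof -
  note eq = equivR
  from assms obtain x where x: "x \<in> term_set Ops ar Cs Xs" "A = prov_eq Ops ar Cs Xs \<Lambda> `` {x}"
    by (auto elim: quotientE)
  have "x \<in> A" using x equiv_class_self[OF eq] by simp
  hence s: "(SOME t. t \<in> A) \<in> A" by (rule someI)
  hence "(x, SOME t. t \<in> A) \<in> prov_eq Ops ar Cs Xs \<Lambda>" using x by simp
  thus ?thesis using x eq R_sub by (metis equiv_class_eq)
qed

lemma some_rep:
  assumes "t \<in> term_set Ops ar Cs Xs"
  shows "(t, SOME s. s \<in> prov_eq Ops ar Cs Xs \<Lambda> `` {t}) \<in> prov_eq Ops ar Cs Xs \<Lambda>"
proof -
  have "t \<in> prov_eq Ops ar Cs Xs \<Lambda> `` {t}" using equiv_class_self[OF equivR assms] .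
  hence "(SOME s. s \<in> prov_eq Ops ar Cs Xs \<Lambda> `` {t}) \<in> prov_eq Ops ar Cs Xs \<Lambda> `` {t}" by (rule someI)
  thus ?thesis by simp
qed

lemma mem_iff:
  assumes "t \<in> term_set Ops ar Cs Xs"
  shows "(l \<le> Sup {l. provable Ops ar Cs Xs \<Lambda> (Mem l t)}) \<longleftrightarrow> provable Ops ar Cs Xs \<Lambda> (Mem l t)"
proof
  assume l: "l \<le> Sup {l. provable Ops ar Cs Xs \<Lambda> (Mem l t)}"
  have "provable Ops ar Cs Xs \<Lambda> (Mem (Sup {l. provable Ops ar Cs Xs \<Lambda> (Mem l t)}) t)"
    unfolding provable_def by (rule deriv.Sup) (auto simp: assms provable_def)
  hence "provable Ops ar Cs Xs \<Lambda> (Mem (inf (Sup {l. provable Ops ar Cs Xs \<Lambda> (Mem l t)}) l) t)"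
    unfolding provable_def by (rule deriv.Mon)
  thus "provable Ops ar Cs Xs \<Lambda> (Mem l t)" using l by (simp add: inf_absorb2)
qed (auto intro: Sup_upper)

lemma Sup_prov:
  assumes "t \<in> term_set Ops ar Cs Xs"
  shows "provable Ops ar Cs Xs \<Lambda> (Mem (Sup {l. provable Ops ar Cs Xs \<Lambda> (Mem l t)}) t)"
  using mem_iff[OF assms, of "Sup {l. provable Ops ar Cs Xs \<Lambda> (Mem l t)}"] by simp

lemma mu_class:
  assumes "t \<in> term_set Ops ar Cs Xs"
  shows "mu (term_alg Ops ar Cs Xs \<Lambda>) (prov_eq Ops ar Cs Xs \<Lambda> `` {t}) = Sup {l. provable Ops ar Cs Xs \<Lambda> (Mem l t)}"
proof -
  define s where "s = (SOME s. s \<in> prov_eq Ops ar Cs Xs \<Lambda> `` {t})"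
  have r: "provable Ops ar Cs Xs \<Lambda> (Eqn t s)" using some_rep[OF assms] R_sub s_def by blast
  have "provable Ops ar Cs Xs \<Lambda> (Mem l t) \<longleftrightarrow> provable Ops ar Cs Xs \<Lambda> (Mem l s)" for l
    using r P_sym[OF r] unfolding provable_def by (meson deriv.Fun)
  thus ?thesis unfolding term_alg_def Let_def s_def by simp
qed


lemma ops_class:
  assumes f: "f \<in> Ops" and len: "length ts = ar f" and ts: "set ts \<subseteq> term_set Ops ar Cs Xs"
  shows "ops (term_alg Ops ar Cs Xs \<Lambda>) f (map (\<lambda>t. prov_eq Ops ar Cs Xs \<Lambda> `` {t}) ts)
         = prov_eq Ops ar Cs Xs \<Lambda> `` {App f ts}"
proof -
  define R where "R = prov_eq Ops ar Cs Xs \<Lambda>"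
  define ss where "ss = map (\<lambda>t. SOME s. s \<in> R `` {t}) ts"
  have rel: "(ts ! i, ss ! i) \<in> R" if "i < ar f" for i
  proof -
    have "ts ! i \<in> term_set Ops ar Cs Xs" using that ts len by (metis nth_mem subsetD)
    from some_rep[OF this] show ?thesis using that len unfolding ss_def R_def by simp
  qed
  have lss: "length ss = ar f" using len ss_def by simp
  have ssT: "set ss \<subseteq> term_set Ops ar Cs Xs"
    using rel R_sub lss unfolding R_def by (metis in_set_conv_nth subsetI)
  have "({}, Eqn (App f ts) (App f ss)) \<in> deriv Ops ar Cs Xs \<Lambda>"
    by (rule deriv.Cong[where ar=ar and f=f and ts=ts and ss=ss, OF f len lss]) (use rel R_sub in \<open>auto simp: R_def provable_def\<close>)
  moreover have "App f ts \<in> term_set Ops ar Cs Xs" using f len ts by (auto intro: term_set.app)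
  moreover have "App f ss \<in> term_set Ops ar Cs Xs" using f lss ssT by (auto intro: term_set.app)
  ultimately have "(App f ss, App f ts) \<in> R"
    unfolding R_def prov_eq_def provable_def by (auto intro: deriv.Sym)
  hence "R `` {App f ss} = R `` {App f ts}" using equivR unfolding R_def by (metis equiv_class_eq)
  moreover have "map (\<lambda>A. SOME t. t \<in> A) (map (\<lambda>t. R `` {t}) ts) = ss"
    unfolding ss_def by simp
  ultimately show ?thesis unfolding term_alg_def Let_def R_def by simp
qed

lemma tsubst_in:
  "t \<in> term_set Ops ar Cs Xs \<Longrightarrow> \<forall>x\<in>Xs. \<sigma> x \<in> term_set Ops ar Cs Xs \<Longrightarrow> tsubst \<sigma> t \<in> term_set Ops ar Cs Xs"
  by (induction t rule: term_set.induct) (auto intro!: term_set.intros)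

lemma eval_gen:
  assumes t: "t \<in> term_set Ops ar Cs Xs"
    and io: "\<forall>x\<in>Xs. prov_eq Ops ar Cs Xs \<Lambda> `` {\<tau> x} = \<iota> x \<and> \<tau> x \<in> term_set Ops ar Cs Xs"
  shows "eval (term_alg Ops ar Cs Xs \<Lambda>) \<iota> t = prov_eq Ops ar Cs Xs \<Lambda> `` {tsubst \<tau> t}"
  using t
proof (induction t rule: term_set.induct)
  case (var x) then show ?case using io by simp
next
  case (cst c) then show ?case by (simp add: term_alg_def Let_def)
next
  case (app f ts)
  have eq: "map (eval (term_alg Ops ar Cs Xs \<Lambda>) \<iota>) ts
      = map (\<lambda>t. prov_eq Ops ar Cs Xs \<Lambda> `` {t}) (map (tsubst \<tau>) ts)"
    using app.IH by simp
  have sub: "set (map (tsubst \<tau>) ts) \<subseteq> term_set Ops ar Cs Xs"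
    using app.IH io tsubst_in by auto
  show ?case unfolding eval.simps tsubst.simps eq
    by (rule ops_class[OF app.hyps(1)]) (use app.hyps(2) sub in auto)
qed

lemma sat_gen:
  assumes phi: "\<phi> \<in> fml_set Ops ar Cs Xs"
    and io: "\<forall>x\<in>Xs. prov_eq Ops ar Cs Xs \<Lambda> `` {\<tau> x} = \<iota> x \<and> \<tau> x \<in> term_set Ops ar Cs Xs"
  shows "sat_at (term_alg Ops ar Cs Xs \<Lambda>) \<iota> \<phi> \<longleftrightarrow> provable Ops ar Cs Xs \<Lambda> (fsubst \<tau> \<phi>)"
proof -
  have tin: "\<forall>x\<in>Xs. \<tau> x \<in> term_set Ops ar Cs Xs" using io by auto
  from phi consider (e) s t where "\<phi> = Eqn s t" "s \<in> term_set Ops ar Cs Xs" "t \<in> term_set Ops ar Cs Xs"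
    | (m) l t where "\<phi> = Mem l t" "t \<in> term_set Ops ar Cs Xs"
    unfolding fml_set_def by blast
  then show ?thesis
  proof cases
    case e
    have s': "tsubst \<tau> s \<in> term_set Ops ar Cs Xs" and t': "tsubst \<tau> t \<in> term_set Ops ar Cs Xs"
      using e tsubst_in tin by auto
    show ?thesis using e eval_gen[OF e(2) io] eval_gen[OF e(3) io]
        eq_equiv_class_iff[OF equivR s' t'] s' t'
      by (simp add: prov_eq_def)
  next
    case m
    have t': "tsubst \<tau> t \<in> term_set Ops ar Cs Xs" using m tsubst_in tin by auto
    show ?thesis using m eval_gen[OF m(2) io] mu_class[OF t'] mem_iff[OF t'] by simp
  qed
qed


lemma tsubst_Var: "tsubst Var t = t"
  by (induction t) (auto intro: map_idI)

lemma fsubst_Var: "fsubst Var \<phi> = \<phi>"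
  by (cases \<phi>) (auto simp: tsubst_Var)

lemma is_salg_TA: "is_salg Ops ar Cs (term_alg Ops ar Cs Xs \<Lambda>)"
  unfolding is_salg_def
proof (intro conjI ballI allI impI)
  fix c assume "c \<in> Cs"
  then show "csts (term_alg Ops ar Cs Xs \<Lambda>) c \<in> carrier (term_alg Ops ar Cs Xs \<Lambda>)"
    by (auto simp: term_alg_def Let_def intro!: quotientI term_set.cst)
next
  fix f as assume f: "f \<in> Ops" and h: "length as = ar f \<and> set as \<subseteq> carrier (term_alg Ops ar Cs Xs \<Lambda>)"
  define R where "R = prov_eq Ops ar Cs Xs \<Lambda>"
  define TA where "TA = term_alg Ops ar Cs Xs \<Lambda>"
  define reps where "reps = map (\<lambda>A. SOME t. t \<in> A) as"
  have car: "carrier TA = term_set Ops ar Cs Xs // R" by (simp add: TA_def R_def term_alg_def Let_def)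
  have len: "length as = ar f" and asub: "set as \<subseteq> term_set Ops ar Cs Xs // R" using h car TA_def by auto
  have lr: "length reps = ar f" using len reps_def by simp
  have rT: "set reps \<subseteq> term_set Ops ar Cs Xs" using asub some_class unfolding reps_def R_def by auto
  have opsv: "ops TA f as = R `` {App f reps}" by (simp add: TA_def R_def term_alg_def Let_def reps_def)
  have appT: "App f reps \<in> term_set Ops ar Cs Xs" using f lr rT by (auto intro: term_set.app)
  have "ops TA f as \<in> carrier TA \<and> Inf (mu TA ` set as) \<le> mu TA (ops TA f as)"
  proof
    show "ops TA f as \<in> carrier TA" using opsv car appT by (auto intro: quotientI)
  next
    define ls where "ls = map (mu TA) as"
    have mui: "mu TA A = Sup {l. provable Ops ar Cs Xs \<Lambda> (Mem l (SOME t. t \<in> A))}" for A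
      by (simp add: TA_def term_alg_def Let_def)
    have "({}, Mem (ls ! i) (reps ! i)) \<in> deriv Ops ar Cs Xs \<Lambda>" if "i < ar f" for i
    proof -
      have "reps ! i \<in> term_set Ops ar Cs Xs" using rT lr that by (metis nth_mem subsetD)
      from Sup_prov[OF this] show ?thesis using that len lr
        by (simp add: ls_def reps_def mui provable_def)
    qed
    hence "({}, Mem (Inf (set ls)) (App f reps)) \<in> deriv Ops ar Cs Xs \<Lambda>"
      by (intro deriv.Exp[where ar=ar and f=f and ts=reps and ls=ls, OF f lr]) (auto simp: ls_def len)
    hence "Inf (set ls) \<le> Sup {l. provable Ops ar Cs Xs \<Lambda> (Mem l (App f reps))}"
      by (auto intro: Sup_upper simp: provable_def)
    moreover have "mu TA (ops TA f as) = Sup {l. provable Ops ar Cs Xs \<Lambda> (Mem l (App f reps))}"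
      using opsv mu_class[OF appT] by (simp add: TA_def R_def)
    ultimately show "Inf (mu TA ` set as) \<le> mu TA (ops TA f as)" by (simp add: ls_def)
  qed
  then show "ops (term_alg Ops ar Cs Xs \<Lambda>) f as \<in> carrier (term_alg Ops ar Cs Xs \<Lambda>)"
    and "Inf (mu (term_alg Ops ar Cs Xs \<Lambda>) ` set as) \<le> mu (term_alg Ops ar Cs Xs \<Lambda>) (ops (term_alg Ops ar Cs Xs \<Lambda>) f as)" by (simp_all add: TA_def)
qed

end

theorem lemma25:
  fixes Ops :: "'o set" and ar :: "'o \<Rightarrow> nat" and Cs :: "'c set" and Xs :: "'v set"
    and \<Lambda> :: "('v, 'o, 'c, 'h::complete_lattice) sequent set"
  assumes frame: "frame_law TYPE('h)"
    and arity: "\<forall>f\<in>Ops. ar f \<ge> 1"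
    and thy: "fuzzy_theory Ops ar Cs Xs \<Lambda>"
  defines "T \<equiv> term_set Ops ar Cs Xs"
    and "F \<equiv> (fml_set Ops ar Cs Xs :: ('v, 'o, 'c, 'h) fml set)"
    and "R \<equiv> prov_eq Ops ar Cs Xs \<Lambda>"
    and "TA \<equiv> term_alg Ops ar Cs Xs \<Lambda>"
    and "ic \<equiv> iota_can Ops ar Cs Xs \<Lambda>"
    and "prov \<equiv> provable Ops ar Cs Xs \<Lambda>"
  shows "equiv T R
    \<and> (\<forall>t\<in>T. mu TA (R `` {t}) = Sup {l. prov (Mem l t)})
    \<and> (\<forall>f\<in>Ops. \<forall>ts. length ts = ar f \<and> set ts \<subseteq> T \<longrightarrow>
          ops TA f (map (\<lambda>t. R `` {t}) ts) = R `` {App f ts})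
    \<and> (\<forall>c\<in>Cs. csts TA c = R `` {Cst c})
    \<and> is_salg Ops ar Cs TA
    \<and> (\<forall>\<phi>\<in>F. (valid Xs TA \<phi> \<longleftrightarrow> sat_at TA ic \<phi>) \<and> (sat_at TA ic \<phi> \<longleftrightarrow> prov \<phi>))
    \<and> (\<forall>\<iota> \<sigma>. assignment Xs TA \<iota> \<longrightarrow>
          (\<forall>A\<in>T // R. \<sigma> A \<in> T \<and> R `` {\<sigma> A} = A) \<longrightarrow>
          (\<forall>\<phi>\<in>F. sat_at TA \<iota> \<phi> \<longleftrightarrow> prov (fsubst (\<sigma> \<circ> \<iota>) \<phi>)))
    \<and> is_model Xs TA \<Lambda>"
proof -
  have car: "carrier TA = T // R" by (simp add: TA_def T_def R_def term_alg_def Let_def)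
  have io_tau: "\<forall>x\<in>Xs. R `` {(\<lambda>x. SOME t. t \<in> \<iota> x) x} = \<iota> x \<and> (\<lambda>x. SOME t. t \<in> \<iota> x) x \<in> T"
    if "assignment Xs TA \<iota>" for \<iota>
    using that some_class car unfolding assignment_def T_def R_def by blast
  have ic_sat: "sat_at TA ic \<phi> \<longleftrightarrow> prov \<phi>" if "\<phi> \<in> F" for \<phi>
  proof -
    have "\<forall>x\<in>Xs. R `` {Var x} = ic x \<and> Var x \<in> T"
      by (auto simp: R_def ic_def iota_can_def T_def intro: term_set.var)
    from sat_gen[OF that[unfolded F_def] this[unfolded R_def T_def]] show ?thesis
      by (simp add: fsubst_Var TA_def prov_def)
  qed
  have sat_any: "prov \<phi> \<Longrightarrow> sat_at TA \<iota> \<phi>" if "\<phi> \<in> F" "assignment Xs TA \<iota>" for \<phi> \<iota>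
  proof -
    assume p: "prov \<phi>"
    define \<tau> where "\<tau> = (\<lambda>x. SOME t. t \<in> \<iota> x)"
    have io: "\<forall>x\<in>Xs. R `` {\<tau> x} = \<iota> x \<and> \<tau> x \<in> T" using io_tau[OF that(2)] \<tau>_def by simp
    have "(fsubst \<tau> ` {}, fsubst \<tau> \<phi>) \<in> deriv Ops ar Cs Xs \<Lambda>"
      by (rule deriv.Sub) (use p io in \<open>auto simp: prov_def provable_def T_def\<close>)
    hence "prov (fsubst \<tau> \<phi>)" by (simp add: prov_def provable_def)
    thus ?thesis using sat_gen[OF that(1)[unfolded F_def] io[unfolded R_def T_def]]
      by (simp add: TA_def prov_def comp_def)
  qed
  have ic_ass: "assignment Xs TA ic"
    by (auto simp: assignment_def car ic_def iota_can_def T_def R_def intro!: quotientI term_set.var)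
  have part7: "\<forall>\<iota> \<sigma>. assignment Xs TA \<iota> \<longrightarrow>
          (\<forall>A\<in>T // R. \<sigma> A \<in> T \<and> R `` {\<sigma> A} = A) \<longrightarrow>
          (\<forall>\<phi>\<in>F. sat_at TA \<iota> \<phi> \<longleftrightarrow> prov (fsubst (\<sigma> \<circ> \<iota>) \<phi>))"
  proof (intro allI impI ballI)
    fix \<iota> \<sigma> \<phi> assume a: "assignment Xs TA \<iota>" and s: "\<forall>A\<in>T // R. \<sigma> A \<in> T \<and> R `` {\<sigma> A} = A"
      and phi: "\<phi> \<in> F"
    have "\<forall>x\<in>Xs. R `` {(\<sigma> \<circ> \<iota>) x} = \<iota> x \<and> (\<sigma> \<circ> \<iota>) x \<in> T"
      using a s car unfolding assignment_def by auto
    from sat_gen[OF phi[unfolded F_def] this[unfolded R_def T_def]]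
    show "sat_at TA \<iota> \<phi> \<longleftrightarrow> prov (fsubst (\<sigma> \<circ> \<iota>) \<phi>)" by (simp add: TA_def prov_def comp_def)
  qed
  have model: "is_model Xs TA \<Lambda>"
    unfolding is_model_def sat_seq_def
  proof (intro ballI allI impI)
    fix s \<iota> assume sL: "s \<in> \<Lambda>" and a: "assignment Xs TA \<iota>" and g: "\<forall>\<phi>\<in>fst s. sat_at TA \<iota> \<phi>"
    obtain \<Gamma> \<psi> where sdef: "s = (\<Gamma>, \<psi>)" by (cases s)
    have wf: "\<Gamma> \<subseteq> F" "\<psi> \<in> F" using thy sL sdef unfolding fuzzy_theory_def F_def by auto
    define \<tau> where "\<tau> = (\<lambda>x. SOME t. t \<in> \<iota> x)"
    have io: "\<forall>x\<in>Xs. R `` {\<tau> x} = \<iota> x \<and> \<tau> x \<in> T" using io_tau[OF a] \<tau>_def by simp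
    have sg: "sat_at TA \<iota> \<phi> \<longleftrightarrow> prov (fsubst \<tau> \<phi>)" if "\<phi> \<in> F" for \<phi>
      using sat_gen[OF that[unfolded F_def] io[unfolded R_def T_def]] by (simp add: TA_def prov_def comp_def)
    have d0: "(\<Gamma>, \<psi>) \<in> deriv Ops ar Cs Xs \<Lambda>" using sL sdef by (simp add: deriv.Thy)
    have tT: "\<forall>x\<in>Xs. \<tau> x \<in> term_set Ops ar Cs Xs" using io by (simp add: T_def)
    have c1: "(fsubst \<tau> ` \<Gamma>, fsubst \<tau> \<psi>) \<in> deriv Ops ar Cs Xs \<Lambda>"
      by (rule deriv.Sub[OF d0 tT])
    have c2: "\<forall>\<phi>\<in>fsubst \<tau> ` \<Gamma>. ({}, \<phi>) \<in> deriv Ops ar Cs Xs \<Lambda>"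
    proof
      fix \<phi>' assume "\<phi>' \<in> fsubst \<tau> ` \<Gamma>"
      then obtain \<phi> where p: "\<phi> \<in> \<Gamma>" "\<phi>' = fsubst \<tau> \<phi>" by blast
      have "sat_at TA \<iota> \<phi>" using g p sdef by simp
      hence "prov (fsubst \<tau> \<phi>)" using sg wf p by blast
      thus "({}, \<phi>') \<in> deriv Ops ar Cs Xs \<Lambda>" using p by (simp add: prov_def provable_def)
    qed
    have "({}, fsubst \<tau> \<psi>) \<in> deriv Ops ar Cs Xs \<Lambda>"
      by (rule deriv.Cut[OF empty_subsetI c2 c1])
    thus "sat_at TA \<iota> (snd s)" using sg[OF wf(2)] sdef by (simp add: prov_def provable_def)
  qed
  show ?thesis
  proof (intro conjI)
    show "equiv T R" unfolding T_def R_def by (rule equivR)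
    show "\<forall>t\<in>T. mu TA (R `` {t}) = Sup {l. prov (Mem l t)}"
      unfolding T_def TA_def R_def prov_def by (intro ballI mu_class)
    show "\<forall>f\<in>Ops. \<forall>ts. length ts = ar f \<and> set ts \<subseteq> T \<longrightarrow>
          ops TA f (map (\<lambda>t. R `` {t}) ts) = R `` {App f ts}"
      unfolding T_def TA_def R_def by (intro ballI allI impI ops_class) auto
    show "\<forall>c\<in>Cs. csts TA c = R `` {Cst c}" by (simp add: TA_def R_def term_alg_def Let_def)
    show "is_salg Ops ar Cs TA" unfolding TA_def by (rule is_salg_TA)
    show "\<forall>\<phi>\<in>F. (valid Xs TA \<phi> \<longleftrightarrow> sat_at TA ic \<phi>) \<and> (sat_at TA ic \<phi> \<longleftrightarrow> prov \<phi>)"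
      using ic_sat sat_any ic_ass unfolding valid_def by blast
  qed (rule part7, rule model)
qed

end
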